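(* The triple $(X,\tau,\mathcal{P})$ is a $\mathcal{P}P$-space if and only if every essential ideal of $C(X)_\mathcal{P}$ is a $z$-ideal.
   Context: Let $(X,\tau)$ be a $T_1$ topological space and $\mathcal{P}$ an ideal of closed subsets of $X$ (a nonempty family of closed sets closed under finite unions and under taking closed subsets). For $f\colon X\to\mathbb{R}$, $D_f$ denotes the set of points of discontinuity of $f$, and $C(X)_\mathcal{P}=\{f\colon X\to\mathbb{R} : \overline{D_f}\in\mathcal{P}\}$, a commutative ring with unity under pointwise operations. $(X,\tau,\mathcal{P})$ is a $\mathcal{P}P$-space if $C(X)_\mathcal{P}$ is von Neumann regular. An ideal is essential if it intersects every nonzero ideal nontrivially. In a commutative ring, $M(a)$ is the intersection of all maximal ideals containing $a$; an ideal $I$ is a $z$-ideal if $a\in I\Rightarrow M(a)\subseteq I$. *)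

theory Defs
  imports "HOL-Analysis.Analysis" "HOL-Algebra.Ideal"
begin

definition disc_points :: "'a topology \<Rightarrow> ('a \<Rightarrow> real) \<Rightarrow> 'a set" where
  "disc_points X f = {x \<in> topspace X. \<not> (\<forall>V. open V \<and> f x \<in> V \<longrightarrow>
        (\<exists>U. openin X U \<and> x \<in> U \<and> f ` U \<subseteq> V))}"

definition closed_ideal :: "'a topology \<Rightarrow> 'a set set \<Rightarrow> bool" where
  "closed_ideal X P \<longleftrightarrow> P \<noteq> {} \<and> (\<forall>A\<in>P. closedin X A)
     \<and> (\<forall>A\<in>P. \<forall>B\<in>P. A \<union> B \<in> P)
     \<and> (\<forall>A\<in>P. \<forall>B. closedin X B \<and> B \<subseteq> A \<longrightarrow> B \<in> P)"

text \<open>The ring C(X)_P. Functions X \<rightarrow> R are represented as functions on the whole type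
  that vanish outside topspace X (so that each function on X has a unique representative).\<close>
definition CP_carrier :: "'a topology \<Rightarrow> 'a set set \<Rightarrow> ('a \<Rightarrow> real) set" where
  "CP_carrier X P = {f. (\<forall>x. x \<notin> topspace X \<longrightarrow> f x = 0) \<and> X closure_of (disc_points X f) \<in> P}"

definition CP_ring :: "'a topology \<Rightarrow> 'a set set \<Rightarrow> ('a \<Rightarrow> real) ring" where
  "CP_ring X P = \<lparr>carrier = CP_carrier X P,
                  mult = (\<lambda>f g x. f x * g x),
                  one = (\<lambda>x. if x \<in> topspace X then 1 else 0),
                  zero = (\<lambda>x. 0),
                  add = (\<lambda>f g x. f x + g x)\<rparr>"

definition von_neumann_regular :: "('b, 'm) ring_scheme \<Rightarrow> bool" where
  "von_neumann_regular R \<longleftrightarrow>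
     (\<forall>a\<in>carrier R. \<exists>b\<in>carrier R. a = a \<otimes>\<^bsub>R\<^esub> b \<otimes>\<^bsub>R\<^esub> a)"

definition PP_space :: "'a topology \<Rightarrow> 'a set set \<Rightarrow> bool" where
  "PP_space X P \<longleftrightarrow> von_neumann_regular (CP_ring X P)"

definition essential_ideal :: "'b set \<Rightarrow> ('b, 'm) ring_scheme \<Rightarrow> bool" where
  "essential_ideal I R \<longleftrightarrow> ideal I R \<and>
     (\<forall>J. ideal J R \<and> J \<noteq> {\<zero>\<^bsub>R\<^esub>} \<longrightarrow> I \<inter> J \<noteq> {\<zero>\<^bsub>R\<^esub>})"

text \<open>M(a): intersection of all maximal ideals containing a (the whole ring if there are none).\<close>
definition M_ideal :: "('b, 'm) ring_scheme \<Rightarrow> 'b \<Rightarrow> 'b set" where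
  "M_ideal R a = carrier R \<inter> \<Inter>{M. maximalideal M R \<and> a \<in> M}"

definition z_ideal :: "'b set \<Rightarrow> ('b, 'm) ring_scheme \<Rightarrow> bool" where
  "z_ideal I R \<longleftrightarrow> ideal I R \<and> (\<forall>a\<in>I. M_ideal R a \<subseteq> I)"

end

theory Submission
  imports Defs
begin

lemma disc_map2:
  fixes f g h :: "'a \<Rightarrow> real" and \<phi> :: "real \<times> real \<Rightarrow> real"
  assumes x: "x \<in> topspace X" and nf: "x \<notin> disc_points X f" and ng: "x \<notin> disc_points X g"
    and c: "isCont \<phi> (f x, g x)" and h: "\<forall>y\<in>topspace X. h y = \<phi> (f y, g y)"
  shows "x \<notin> disc_points X h"
proof -
  have F: "\<exists>U. openin X U \<and> x \<in> U \<and> f ` U \<subseteq> V" if "open V" "f x \<in> V" for V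
    using nf x that unfolding disc_points_def by blast
  have G: "\<exists>U. openin X U \<and> x \<in> U \<and> g ` U \<subseteq> V" if "open V" "g x \<in> V" for V
    using ng x that unfolding disc_points_def by blast
  have "\<exists>U. openin X U \<and> x \<in> U \<and> h ` U \<subseteq> V" if V: "open V" "h x \<in> V" for V
  proof -
    have "\<phi> (f x, g x) \<in> V" using V h x by simp
    then obtain W where W: "open W" "(f x, g x) \<in> W" "\<forall>z\<in>W. \<phi> z \<in> V"
      using c V(1) unfolding continuous_at_open by blast
    then obtain A B where AB: "open A" "open B" "(f x, g x) \<in> A \<times> B" "A \<times> B \<subseteq> W"
      by (metis open_prod_elim)
    obtain U1 where U1: "openin X U1" "x \<in> U1" "f ` U1 \<subseteq> A" using F[OF AB(1)] AB(3) by auto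
    obtain U2 where U2: "openin X U2" "x \<in> U2" "g ` U2 \<subseteq> B" using G[OF AB(2)] AB(3) by auto
    have "h ` (U1 \<inter> U2) \<subseteq> V"
    proof
      fix v assume "v \<in> h ` (U1 \<inter> U2)"
      then obtain y where y: "y \<in> U1" "y \<in> U2" "v = h y" by auto
      have "y \<in> topspace X" using U1 y openin_subset by blast
      moreover have "(f y, g y) \<in> W" using AB U1 U2 y by blast
      ultimately show "v \<in> V" using W h y by auto
    qed
    then show ?thesis using U1 U2 by (intro exI[of _ "U1 \<inter> U2"]) auto
  qed
  then show ?thesis unfolding disc_points_def by blast
qed

lemma disc_subset: "disc_points X f \<subseteq> topspace X"
  unfolding disc_points_def by auto

lemma carrier_map2:
  fixes f g h :: "'a \<Rightarrow> real" and \<phi> :: "real \<times> real \<Rightarrow> real"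
  assumes P: "closed_ideal X P" and f: "f \<in> CP_carrier X P" and g: "g \<in> CP_carrier X P"
    and h: "\<forall>y\<in>topspace X. h y = \<phi> (f y, g y)"
    and h0: "\<And>y. y \<notin> topspace X \<Longrightarrow> h y = 0"
    and c: "\<And>y. y \<in> topspace X \<Longrightarrow> y \<notin> disc_points X f \<Longrightarrow> y \<notin> disc_points X g \<Longrightarrow> isCont \<phi> (f y, g y)"
  shows "h \<in> CP_carrier X P"
proof -
  have "disc_points X h \<subseteq> disc_points X f \<union> disc_points X g"
  proof
    fix y assume y: "y \<in> disc_points X h"
    then have yT: "y \<in> topspace X" using disc_subset[of X h] y by blast
    show "y \<in> disc_points X f \<union> disc_points X g"
    proof (rule ccontr)
      assume a: "y \<notin> disc_points X f \<union> disc_points X g"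
      then have nf: "y \<notin> disc_points X f" and ng: "y \<notin> disc_points X g" by blast+
      have "y \<notin> disc_points X h" using disc_map2[OF yT nf ng c[OF yT nf ng] h] .
      then show False using y by blast
    qed
  qed
  then have s: "X closure_of disc_points X h \<subseteq> X closure_of disc_points X f \<union> X closure_of disc_points X g"
    by (metis closure_of_Un closure_of_mono)
  have un: "\<forall>A\<in>P. \<forall>B\<in>P. A \<union> B \<in> P"
    using P unfolding closed_ideal_def by (elim conjE) assumption
  have dn: "\<forall>A\<in>P. \<forall>B. closedin X B \<and> B \<subseteq> A \<longrightarrow> B \<in> P"
    using P unfolding closed_ideal_def by (elim conjE) assumption
  have "X closure_of disc_points X f \<in> P" "X closure_of disc_points X g \<in> P"
    using f g unfolding CP_carrier_def by auto
  then have "X closure_of disc_points X f \<union> X closure_of disc_points X g \<in> P"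
    using un by simp
  then have "X closure_of disc_points X h \<in> P"
    using dn s closedin_closure_of[of X "disc_points X h"] by simp
  then show ?thesis using h0 unfolding CP_carrier_def by simp
qed


lemma disc_const: "disc_points X (\<lambda>x. if x \<in> topspace X then c else 0) = {}"
proof -
  have "x \<notin> disc_points X (\<lambda>x. if x \<in> topspace X then c else 0)" for x
  proof -
    have "\<exists>U. openin X U \<and> x \<in> U \<and> (\<lambda>x. if x \<in> topspace X then c else 0) ` U \<subseteq> V"
      if "open V" "(if x \<in> topspace X then c else 0) \<in> V" "x \<in> topspace X" for V
      using that by (intro exI[of _ "topspace X"]) auto
    then show ?thesis unfolding disc_points_def by blast
  qed
  then show ?thesis by blast
qed

context
  fixes X :: "'a topology" and P :: "'a set set"
  assumes P: "closed_ideal X P"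
begin

lemma empty_in_P: "{} \<in> P"
proof -
  have ne: "P \<noteq> {}"
    using P unfolding closed_ideal_def by (elim conjE) assumption
  have dn: "\<forall>A\<in>P. \<forall>B. closedin X B \<and> B \<subseteq> A \<longrightarrow> B \<in> P"
    using P unfolding closed_ideal_def by (elim conjE) assumption
  from ne obtain A where "A \<in> P" by blast
  then show ?thesis using dn by simp
qed

lemma const_in: "(\<lambda>x. if x \<in> topspace X then c else 0) \<in> CP_carrier X P"
  unfolding CP_carrier_def using empty_in_P by (simp add: disc_const)

lemma zero_in: "(\<lambda>x. 0) \<in> CP_carrier X P"
  using const_in[of 0] by simp

lemma C_zero_out: "f \<in> CP_carrier X P \<Longrightarrow> x \<notin> topspace X \<Longrightarrow> f x = 0"
  unfolding CP_carrier_def by simp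

lemma add_in: assumes "f \<in> CP_carrier X P" "g \<in> CP_carrier X P" shows "(\<lambda>x. f x + g x) \<in> CP_carrier X P"
  by (rule carrier_map2[OF P assms, where \<phi>="\<lambda>z. fst z + snd z"]) (use assms in \<open>auto simp: C_zero_out intro!: continuous_intros\<close>)

lemma mult_in: assumes "f \<in> CP_carrier X P" "g \<in> CP_carrier X P" shows "(\<lambda>x. f x * g x) \<in> CP_carrier X P"
  by (rule carrier_map2[OF P assms, where \<phi>="\<lambda>z. fst z * snd z"]) (use assms in \<open>auto simp: C_zero_out intro!: continuous_intros\<close>)

lemma neg_in: "f \<in> CP_carrier X P \<Longrightarrow> (\<lambda>x. - f x) \<in> CP_carrier X P"
  by (rule carrier_map2[OF P, where \<phi>="\<lambda>z. - fst z" and g=f]) (auto simp: C_zero_out intro!: continuous_intros)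

lemma root_in: "f \<in> CP_carrier X P \<Longrightarrow> (\<lambda>x. root 3 (f x)) \<in> CP_carrier X P"
  by (rule carrier_map2[OF P, where \<phi>="\<lambda>z. root 3 (fst z)" and g=f]) (auto simp: C_zero_out intro!: continuous_intros)

lemma one_in: "(\<lambda>x. if x \<in> topspace X then 1 else 0) \<in> CP_carrier X P"
  by (rule const_in)

lemma inv_in:
  assumes "f \<in> CP_carrier X P" "\<forall>x\<in>topspace X. f x \<noteq> 0"
  shows "(\<lambda>x. if x \<in> topspace X then inverse (f x) else 0) \<in> CP_carrier X P"
  by (rule carrier_map2[OF P assms(1) assms(1), where \<phi>="\<lambda>z. inverse (fst z)"]) (use assms(2) in \<open>auto intro!: continuous_intros\<close>)

lemma R_simps:
  "carrier (CP_ring X P) = CP_carrier X P"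
  "mult (CP_ring X P) = (\<lambda>f g x. f x * g x)"
  "add (CP_ring X P) = (\<lambda>f g x. f x + g x)"
  "one (CP_ring X P) = (\<lambda>x. if x \<in> topspace X then 1 else 0)"
  "zero (CP_ring X P) = (\<lambda>x. 0)"
  by (simp_all add: CP_ring_def)

lemma cring_R: "cring (CP_ring X P)"
proof (rule cringI)
  show "abelian_group (CP_ring X P)"
  proof (rule abelian_groupI)
    show "\<exists>y\<in>carrier (CP_ring X P). y \<oplus>\<^bsub>CP_ring X P\<^esub> x = \<zero>\<^bsub>CP_ring X P\<^esub>" if "x \<in> carrier (CP_ring X P)" for x
      using that neg_in[of x] by (intro bexI[of _ "\<lambda>y. - x y"]) (simp_all add: R_simps)
  qed (auto simp: R_simps add_in zero_in algebra_simps)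
  show "comm_monoid (CP_ring X P)"
    by (rule comm_monoidI) (auto simp: R_simps mult_in one_in algebra_simps C_zero_out fun_eq_iff)
qed (auto simp: R_simps fun_eq_iff algebra_simps)

lemma ring_R: "ring (CP_ring X P)"
  using cring_R cring.axioms(1) by blast

lemma a_inv_R: "f \<in> CP_carrier X P \<Longrightarrow> a_inv (CP_ring X P) f = (\<lambda>x. - f x)"
  using abelian_group.minus_equality[of "CP_ring X P" "\<lambda>x. - f x" f] cring_R neg_in[of f]
  by (simp add: R_simps cring.axioms ring.axioms)


lemma id_sub: "ideal S (CP_ring X P) \<Longrightarrow> S \<subseteq> CP_carrier X P"
  using additive_subgroup.a_subset[OF ideal.axioms(1)] by (metis R_simps(1))

lemma id_add: "ideal S (CP_ring X P) \<Longrightarrow> f \<in> S \<Longrightarrow> g \<in> S \<Longrightarrow> (\<lambda>x. f x + g x) \<in> S"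
  using additive_subgroup.a_closed[OF ideal.axioms(1), of S "CP_ring X P" f g] by (simp add: R_simps)

lemma id_zero: "ideal S (CP_ring X P) \<Longrightarrow> (\<lambda>x. 0) \<in> S"
  using additive_subgroup.zero_closed[OF ideal.axioms(1), of S "CP_ring X P"] by (simp add: R_simps)

lemma id_neg: assumes "ideal S (CP_ring X P)" "f \<in> S" shows "(\<lambda>x. - f x) \<in> S"
proof -
  have "f \<in> CP_carrier X P" using id_sub[OF assms(1)] assms(2) by blast
  then show ?thesis
    using additive_subgroup.a_inv_closed[OF ideal.axioms(1)[OF assms(1)] assms(2)] a_inv_R[of f] by simp
qed

lemma id_mult: "ideal S (CP_ring X P) \<Longrightarrow> f \<in> S \<Longrightarrow> r \<in> CP_carrier X P \<Longrightarrow> (\<lambda>x. r x * f x) \<in> S"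
  using ideal.I_l_closed[of S "CP_ring X P" f r] by (simp add: R_simps)

lemma id_one: "ideal S (CP_ring X P) \<Longrightarrow> (\<lambda>x. if x \<in> topspace X then 1 else 0) \<in> S \<Longrightarrow> S = CP_carrier X P"
  using ideal.one_imp_carrier[of S "CP_ring X P"] by (simp add: R_simps)

lemma ideal_R:
  assumes "S \<subseteq> CP_carrier X P" "(\<lambda>x. 0) \<in> S" "\<And>f g. f \<in> S \<Longrightarrow> g \<in> S \<Longrightarrow> (\<lambda>x. f x + g x) \<in> S"
    "\<And>f. f \<in> S \<Longrightarrow> (\<lambda>x. - f x) \<in> S"
    "\<And>f r. f \<in> S \<Longrightarrow> r \<in> CP_carrier X P \<Longrightarrow> (\<lambda>x. r x * f x) \<in> S"
  shows "ideal S (CP_ring X P)"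
proof (rule idealI[OF ring_R])
  show "subgroup S (add_monoid (CP_ring X P))"
  proof (rule subgroup.intro)
    fix x assume x: "x \<in> S"
    have "inv\<^bsub>add_monoid (CP_ring X P)\<^esub> x = a_inv (CP_ring X P) x" by (simp add: a_inv_def)
    also have "\<dots> = (\<lambda>y. - x y)" using x assms(1) a_inv_R by blast
    finally show "inv\<^bsub>add_monoid (CP_ring X P)\<^esub> x \<in> S" using assms(4) x by simp
  qed (use assms in \<open>auto simp: R_simps\<close>)
next
  fix a x assume "a \<in> S" "x \<in> carrier (CP_ring X P)"
  then show "x \<otimes>\<^bsub>CP_ring X P\<^esub> a \<in> S" "a \<otimes>\<^bsub>CP_ring X P\<^esub> x \<in> S"
    using assms(5)[of a x] by (simp_all add: R_simps mult.commute)
qed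

lemma max_point:
  assumes p: "p \<in> topspace X"
  shows "maximalideal {f \<in> CP_carrier X P. f p = 0} (CP_ring X P)"
proof (rule maximalidealI)
  show "ideal {f \<in> CP_carrier X P. f p = 0} (CP_ring X P)"
    by (rule ideal_R) (auto simp: zero_in add_in neg_in mult_in)
  show "carrier (CP_ring X P) \<noteq> {f \<in> CP_carrier X P. f p = 0}"
  proof
    assume "carrier (CP_ring X P) = {f \<in> CP_carrier X P. f p = 0}"
    then have "(\<lambda>x. if x \<in> topspace X then 1 else 0) \<in> {f \<in> CP_carrier X P. f p = 0}"
      using one_in R_simps(1) by metis
    then show False using p by simp
  qed
  fix J assume J: "ideal J (CP_ring X P)" "{f \<in> CP_carrier X P. f p = 0} \<subseteq> J" "J \<subseteq> carrier (CP_ring X P)"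
  show "J = {f \<in> CP_carrier X P. f p = 0} \<or> J = carrier (CP_ring X P)"
  proof (cases "J = {f \<in> CP_carrier X P. f p = 0}")
    case False
    then obtain g where g: "g \<in> J" "g p \<noteq> 0" using J(2) J(3) by (auto simp: R_simps)
    have gC: "g \<in> CP_carrier X P" using g J(3) by (auto simp: R_simps)
    define c where "c = (\<lambda>x. if x \<in> topspace X then inverse (g p) else 0)"
    have cC: "c \<in> CP_carrier X P" unfolding c_def by (rule const_in)
    have cg: "(\<lambda>x. c x * g x) \<in> J" using id_mult[OF J(1) g(1) cC] .
    define m where "m = (\<lambda>x. if x \<in> topspace X then 1 - g x / g p else 0)"
    have mC: "m \<in> CP_carrier X P" unfolding m_def
      by (rule carrier_map2[OF P gC gC, where \<phi>="\<lambda>z. 1 - fst z / g p"]) (use g(2) in \<open>auto intro!: continuous_intros\<close>)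
    have "m \<in> J" using J(2) mC g(2) p unfolding m_def by auto
    then have "(\<lambda>x. m x + c x * g x) \<in> J" using id_add[OF J(1) _ cg] by blast
    moreover have "(\<lambda>x. m x + c x * g x) = (\<lambda>x. if x \<in> topspace X then 1 else 0)"
      using g(2) by (auto simp: m_def c_def fun_eq_iff field_simps)
    ultimately have "J = CP_carrier X P" using id_one[OF J(1)] by simp
    then show ?thesis by (simp add: R_simps)
  qed simp
qed

end


theorem corollary2p19:
  fixes X :: "'a topology" and P :: "'a set set"
  assumes "t1_space X"
    and "closed_ideal X P"
  shows "PP_space X P \<longleftrightarrow>
           (\<forall>I. essential_ideal I (CP_ring X P) \<longrightarrow> z_ideal I (CP_ring X P))"
proof
  note Pc = assms(2)
  assume vn: "PP_space X P"
  show "\<forall>I. essential_ideal I (CP_ring X P) \<longrightarrow> z_ideal I (CP_ring X P)"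
  proof (intro allI impI)
    fix I assume "essential_ideal I (CP_ring X P)"
    then have I: "ideal I (CP_ring X P)" unfolding essential_ideal_def by blast
    have "M_ideal (CP_ring X P) a \<subseteq> I" if aI: "a \<in> I" for a
    proof
      fix x assume xM: "x \<in> M_ideal (CP_ring X P) a"
      have aC: "a \<in> CP_carrier X P" using id_sub[OF Pc I] aI by blast
      have xC: "x \<in> CP_carrier X P" using xM unfolding M_ideal_def by (simp add: R_simps[OF Pc])
      have zx: "x p = 0" if "p \<in> topspace X" "a p = 0" for p
      proof -
        have "a \<in> {f \<in> CP_carrier X P. f p = 0}" using aC that by simp
        then have "x \<in> {f \<in> CP_carrier X P. f p = 0}"
          using xM max_point[OF Pc that(1)] unfolding M_ideal_def by blast
        then show ?thesis by simp
      qed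
      obtain b where bC: "b \<in> CP_carrier X P" and ab: "a = (\<lambda>y. a y * b y * a y)"
        using vn aC unfolding PP_space_def von_neumann_regular_def by (auto simp: R_simps[OF Pc])
      have bx: "(\<lambda>y. b y * x y) \<in> CP_carrier X P" using mult_in[OF Pc bC xC] .
      have "(\<lambda>y. (b y * x y) * a y) \<in> I" using id_mult[OF Pc I aI bx] .
      moreover have "(\<lambda>y. (b y * x y) * a y) = x"
      proof
        fix y
        show "b y * x y * a y = x y"
        proof (cases "y \<in> topspace X \<and> a y \<noteq> 0")
          case True
          have "a y = a y * b y * a y" using fun_cong[OF ab, of y] .
          then have "a y * b y = 1" using True
            by (metis mult.commute mult_cancel_left1 mult.assoc)
          then show ?thesis by (simp add: algebra_simps)
        next
          case False
          then show ?thesis using zx C_zero_out[OF Pc xC] by (cases "y \<in> topspace X") auto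
        qed
      qed
      ultimately show "x \<in> I" by simp
    qed
    then show "z_ideal I (CP_ring X P)" unfolding z_ideal_def using I by blast
  qed
next
  note Pc = assms(2)
  assume H: "\<forall>I. essential_ideal I (CP_ring X P) \<longrightarrow> z_ideal I (CP_ring X P)"
  show "PP_space X P"
    unfolding PP_space_def von_neumann_regular_def
  proof
    fix f assume "f \<in> carrier (CP_ring X P)"
    then have fC: "f \<in> CP_carrier X P" by (simp add: R_simps[OF Pc])
    define I where "I = {u. \<exists>h\<in>CP_carrier X P. \<exists>k\<in>CP_carrier X P. (\<forall>y. k y * f y = 0) \<and> u = (\<lambda>y. f y * h y + k y)}"
    have Iid: "ideal I (CP_ring X P)"
    proof (rule ideal_R[OF Pc])
      show "I \<subseteq> CP_carrier X P" unfolding I_def using add_in[OF Pc] mult_in[OF Pc] fC by blast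
      show "(\<lambda>x. 0) \<in> I" unfolding I_def using zero_in[OF Pc]
        by (intro CollectI bexI[of _ "\<lambda>x. 0"]) auto
    next
      fix u v assume "u \<in> I" "v \<in> I"
      then obtain h1 k1 h2 k2 where h: "h1 \<in> CP_carrier X P" "k1 \<in> CP_carrier X P" "\<forall>y. k1 y * f y = 0"
        "u = (\<lambda>y. f y * h1 y + k1 y)" "h2 \<in> CP_carrier X P" "k2 \<in> CP_carrier X P" "\<forall>y. k2 y * f y = 0"
        "v = (\<lambda>y. f y * h2 y + k2 y)" unfolding I_def by blast
      show "(\<lambda>x. u x + v x) \<in> I" unfolding I_def
        apply (rule CollectI, rule bexI[of _ "\<lambda>y. h1 y + h2 y"], rule bexI[of _ "\<lambda>y. k1 y + k2 y"])
          apply (intro conjI)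
        subgoal using h(3,7) by (metis distrib_right add_0)
        subgoal using h(4,8) by (simp add: fun_eq_iff algebra_simps)
        using h add_in[OF Pc] by auto
    next
      fix u assume "u \<in> I"
      then obtain h1 k1 where h: "h1 \<in> CP_carrier X P" "k1 \<in> CP_carrier X P" "\<forall>y. k1 y * f y = 0"
        "u = (\<lambda>y. f y * h1 y + k1 y)" unfolding I_def by blast
      show "(\<lambda>x. - u x) \<in> I" unfolding I_def
        apply (rule CollectI, rule bexI[of _ "\<lambda>y. - h1 y"], rule bexI[of _ "\<lambda>y. - k1 y"])
        using h neg_in[OF Pc] by (auto simp: algebra_simps)
    next
      fix u r assume "u \<in> I" and rC: "r \<in> CP_carrier X P"
      then obtain h1 k1 where h: "h1 \<in> CP_carrier X P" "k1 \<in> CP_carrier X P" "\<forall>y. k1 y * f y = 0"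
        "u = (\<lambda>y. f y * h1 y + k1 y)" unfolding I_def by blast
      have e: "r y * k1 y * f y = 0" for y using h(3) by (metis mult.assoc mult_zero_right)
      show "(\<lambda>x. r x * u x) \<in> I" unfolding I_def
        apply (rule CollectI, rule bexI[of _ "\<lambda>y. r y * h1 y"], rule bexI[of _ "\<lambda>y. r y * k1 y"])
        using h e mult_in[OF Pc rC] by (auto simp: algebra_simps)
    qed
    have ess: "essential_ideal I (CP_ring X P)"
      unfolding essential_ideal_def
    proof (intro conjI allI impI Iid)
      fix J assume J: "ideal J (CP_ring X P) \<and> J \<noteq> {\<zero>\<^bsub>CP_ring X P\<^esub>}"
      then have J1: "ideal J (CP_ring X P)" and J2: "J \<noteq> {\<lambda>x. 0}" by (simp_all add: R_simps[OF Pc])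
      have "(\<lambda>x. 0) \<in> J" using id_zero[OF Pc J1] .
      then obtain k where kJ: "k \<in> J" and kn: "k \<noteq> (\<lambda>x. 0)" using J2 by blast
      have kC: "k \<in> CP_carrier X P" using id_sub[OF Pc J1] kJ by blast
      show "I \<inter> J \<noteq> {\<zero>\<^bsub>CP_ring X P\<^esub>}"
      proof (cases "\<forall>y. k y * f y = 0")
        case True
        have "k \<in> I" unfolding I_def
          by (rule CollectI, rule bexI[of _ "\<lambda>y. 0"], rule bexI[of _ k]) (use True kC zero_in[OF Pc] in auto)
        then show ?thesis using kJ kn by (auto simp: R_simps[OF Pc])
      next
        case False
        then obtain y where y: "k y * f y \<noteq> 0" by blast
        have "(\<lambda>x. f x * k x) \<in> J" using id_mult[OF Pc J1 kJ fC] .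
        moreover have "(\<lambda>x. f x * k x) \<in> I" unfolding I_def
          by (rule CollectI, rule bexI[of _ k], rule bexI[of _ "\<lambda>y. 0"]) (use kC zero_in[OF Pc] in auto)
        moreover have "(\<lambda>x. f x * k x) \<noteq> (\<lambda>x. 0)"
        proof
          assume "(\<lambda>x. f x * k x) = (\<lambda>x. 0)"
          then have "f y * k y = 0" by (metis)
          then show False using y by (simp add: mult.commute)
        qed
        ultimately show ?thesis by (auto simp: R_simps[OF Pc])
      qed
    qed
    then have zI: "z_ideal I (CP_ring X P)" using H by blast
    have fI: "f \<in> I" unfolding I_def
    proof (rule CollectI, rule bexI[of _ "\<lambda>x. if x \<in> topspace X then 1 else 0"], rule bexI[of _ "\<lambda>x. 0"])
      show "(\<forall>y. 0 * f y = 0) \<and> f = (\<lambda>y. f y * (if y \<in> topspace X then 1 else 0) + 0)"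
        using C_zero_out[OF Pc fC] by (auto simp: fun_eq_iff)
    qed (use zero_in[OF Pc] one_in[OF Pc] in auto)
    define g where "g = (\<lambda>y. root 3 (f y))"
    have gC: "g \<in> CP_carrier X P" unfolding g_def using root_in[OF Pc fC] .
    have gM: "g \<in> M_ideal (CP_ring X P) f"
      unfolding M_ideal_def
    proof (intro IntI InterI)
      show "g \<in> carrier (CP_ring X P)" using gC by (simp add: R_simps[OF Pc])
      fix M assume "M \<in> {M. maximalideal M (CP_ring X P) \<and> f \<in> M}"
      then have Mm: "maximalideal M (CP_ring X P)" and fM: "f \<in> M" by auto
      have Mi: "ideal M (CP_ring X P)" using Mm maximalideal.axioms(1) by blast
      have MC: "M \<subseteq> CP_carrier X P" using id_sub[OF Pc Mi] .
      show "g \<in> M"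
      proof (rule ccontr)
        assume gn: "g \<notin> M"
        define J where "J = {u. \<exists>m\<in>M. \<exists>r\<in>CP_carrier X P. u = (\<lambda>y. m y + r y * g y)}"
        have Jid: "ideal J (CP_ring X P)"
        proof (rule ideal_R[OF Pc])
          show "J \<subseteq> CP_carrier X P" unfolding J_def using MC add_in[OF Pc] mult_in[OF Pc] gC by blast
          show "(\<lambda>x. 0) \<in> J" unfolding J_def using zero_in[OF Pc] id_zero[OF Pc Mi]
            by (intro CollectI bexI[of _ "\<lambda>x. 0"]) auto
        next
          fix u v assume "u \<in> J" "v \<in> J"
          then obtain m1 r1 m2 r2 where h: "m1 \<in> M" "r1 \<in> CP_carrier X P" "u = (\<lambda>y. m1 y + r1 y * g y)"
            "m2 \<in> M" "r2 \<in> CP_carrier X P" "v = (\<lambda>y. m2 y + r2 y * g y)" unfolding J_def by blast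
          show "(\<lambda>x. u x + v x) \<in> J" unfolding J_def
            apply (rule CollectI, rule bexI[of _ "\<lambda>y. m1 y + m2 y"], rule bexI[of _ "\<lambda>y. r1 y + r2 y"])
            using h add_in[OF Pc] id_add[OF Pc Mi] by (auto simp: algebra_simps)
        next
          fix u assume "u \<in> J"
          then obtain m1 r1 where h: "m1 \<in> M" "r1 \<in> CP_carrier X P" "u = (\<lambda>y. m1 y + r1 y * g y)"
            unfolding J_def by blast
          show "(\<lambda>x. - u x) \<in> J" unfolding J_def
            apply (rule CollectI, rule bexI[of _ "\<lambda>y. - m1 y"], rule bexI[of _ "\<lambda>y. - r1 y"])
            using h neg_in[OF Pc] id_neg[OF Pc Mi] by (auto simp: algebra_simps)
        next
          fix u r assume "u \<in> J" and rC: "r \<in> CP_carrier X P"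
          then obtain m1 r1 where h: "m1 \<in> M" "r1 \<in> CP_carrier X P" "u = (\<lambda>y. m1 y + r1 y * g y)"
            unfolding J_def by blast
          show "(\<lambda>x. r x * u x) \<in> J" unfolding J_def
            apply (rule CollectI, rule bexI[of _ "\<lambda>y. r y * m1 y"], rule bexI[of _ "\<lambda>y. r y * r1 y"])
            using h mult_in[OF Pc rC] id_mult[OF Pc Mi _ rC] by (auto simp: algebra_simps)
        qed
        have MJ: "M \<subseteq> J"
        proof
          fix m assume "m \<in> M"
          then show "m \<in> J" unfolding J_def
            by (intro CollectI bexI[of _ m] bexI[of _ "\<lambda>x. 0"]) (auto simp: zero_in[OF Pc])
        qed
        have gJ: "g \<in> J" unfolding J_def
        proof (rule CollectI, rule bexI[of _ "\<lambda>x. 0"], rule bexI[of _ "\<lambda>x. if x \<in> topspace X then 1 else 0"])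
          show "g = (\<lambda>y. 0 + (if y \<in> topspace X then 1 else 0) * g y)"
            using C_zero_out[OF Pc gC] by (auto simp: fun_eq_iff)
        qed (use id_zero[OF Pc Mi] one_in[OF Pc] in auto)
        have "J = M \<or> J = carrier (CP_ring X P)"
          using maximalideal.I_maximal[OF Mm Jid MJ] id_sub[OF Pc Jid] by (simp add: R_simps[OF Pc])
        then have "J = CP_carrier X P" using gJ gn by (auto simp: R_simps[OF Pc])
        then have "(\<lambda>x. if x \<in> topspace X then 1 else 0) \<in> J" using one_in[OF Pc] by simp
        then obtain m r where mM: "m \<in> M" and rC: "r \<in> CP_carrier X P"
          and one: "(\<lambda>x. if x \<in> topspace X then 1 else 0) = (\<lambda>y. m y + r y * g y)"
          unfolding J_def by blast
        define u where "u = (\<lambda>y. f y * f y + m y * m y)"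
        have mC: "m \<in> CP_carrier X P" using MC mM by blast
        have uM: "u \<in> M" unfolding u_def
          using id_add[OF Pc Mi id_mult[OF Pc Mi fM fC] id_mult[OF Pc Mi mM mC]] .
        have uC: "u \<in> CP_carrier X P" using MC uM by blast
        have unz: "\<forall>x\<in>topspace X. u x \<noteq> 0"
        proof
          fix x assume xT: "x \<in> topspace X"
          show "u x \<noteq> 0"
          proof
            assume "u x = 0"
            then have "f x = 0" "m x = 0" unfolding u_def by (simp_all add: add_nonneg_eq_0_iff)
            then have "m x + r x * g x = 0" unfolding g_def by simp
            moreover have "m x + r x * g x = 1" using fun_cong[OF one, of x] xT by simp
            ultimately show False by simp
          qed
        qed
        define v where "v = (\<lambda>x. if x \<in> topspace X then inverse (u x) else 0)"
        have vC: "v \<in> CP_carrier X P" unfolding v_def using inv_in[OF Pc uC unz] .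
        have "(\<lambda>x. v x * u x) \<in> M" using id_mult[OF Pc Mi uM vC] .
        moreover have "(\<lambda>x. v x * u x) = (\<lambda>x. if x \<in> topspace X then 1 else 0)"
          using unz by (auto simp: v_def fun_eq_iff)
        ultimately have "M = CP_carrier X P" using id_one[OF Pc Mi] by simp
        then show False using maximalideal.I_notcarr[OF Mm] by (simp add: R_simps[OF Pc])
      qed
    qed
    have "g \<in> I" using zI fI gM unfolding z_ideal_def by blast
    then obtain h k where hC: "h \<in> CP_carrier X P" and kC: "k \<in> CP_carrier X P"
      and kf: "\<forall>y. k y * f y = 0" and gdef: "g = (\<lambda>y. f y * h y + k y)" unfolding I_def by blast
    define b where "b = (\<lambda>y. h y * h y * g y)"
    have bC: "b \<in> CP_carrier X P" unfolding b_def using mult_in[OF Pc mult_in[OF Pc hC hC] gC] .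
    have "f = (\<lambda>y. f y * b y * f y)"
    proof
      fix y
      show "f y = f y * b y * f y"
      proof (cases "f y = 0")
        case False
        then have "k y = 0" using kf[rule_format, of y] by simp
        then have gy: "g y = f y * h y" using fun_cong[OF gdef, of y] by simp
        have "g y ^ 3 = f y" unfolding g_def by (simp add: odd_real_root_pow)
        then have "f y = f y ^ 3 * h y ^ 3" using gy by (simp add: power_mult_distrib)
        also have "\<dots> = f y * b y * f y" unfolding b_def gy by (simp add: power3_eq_cube algebra_simps)
        finally show ?thesis .
      qed simp
    qed
    then show "\<exists>b\<in>carrier (CP_ring X P). f = f \<otimes>\<^bsub>CP_ring X P\<^esub> b \<otimes>\<^bsub>CP_ring X P\<^esub> f"
      using bC by (auto simp: R_simps[OF Pc])
  qed
qed

end
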